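(* Let $a,b$ be integers, let $G\in\mathscr{G}_{a,b}$, and let $P=u_0u_1\ldots u_k$ be an internal path or an internal cycle in $G$. Then: (i) $k\le 3$; (ii) if $k=3$, then there is no internal path $v_0v_1v_2$ of length $2$ in $G$ with $d_G(v_0)=d_G(v_2)=d_G(u_0)$; (iii) if $k=3$, then $d_G(u_0)=d_G(u_3)$; moreover, if $G$ contains another internal path $v_0v_1v_2v_3$, then $d_G(v_0)=d_G(v_3)=d_G(u_0)=d_G(u_3)$.
   Context: All graphs are simple and connected; $d_G(v)$ is the degree of $v$ and $N_G(v)$ its neighbourhood. For integers $a,b$, $\mathscr{G}_{a,b}$ is the set of connected graphs $G$ such that for every $v\in V_G$, $\sum_{u\in N_G(v)}d_G(u)=a\,d_G(v)+b-d_G(v)^2$. A path $u_0u_1\ldots u_k$ ($k\ge1$) in $G$ with $d_G(u_0),d_G(u_k)\ge 3$ and $d_G(u_i)=2$ for $1\le i\le k-1$ is called an internal path if $u_0\ne u_k$, and an internal cycle if $u_0=u_k$ (then $k\ge 3$). *)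

theory Defs
  imports Main
begin

definition simple_conn_graph :: "'a set \<Rightarrow> ('a \<Rightarrow> 'a \<Rightarrow> bool) \<Rightarrow> bool" where
  "simple_conn_graph V E \<longleftrightarrow> finite V \<and> V \<noteq> {} \<and>
     (\<forall>x y. E x y \<longrightarrow> x \<in> V \<and> y \<in> V) \<and>
     (\<forall>x y. E x y \<longrightarrow> E y x) \<and> (\<forall>x. \<not> E x x) \<and>
     (\<forall>x\<in>V. \<forall>y\<in>V. E\<^sup>*\<^sup>* x y)"

definition nbhd :: "'a set \<Rightarrow> ('a \<Rightarrow> 'a \<Rightarrow> bool) \<Rightarrow> 'a \<Rightarrow> 'a set" where
  "nbhd V E v = {u \<in> V. E v u}"

definition deg :: "'a set \<Rightarrow> ('a \<Rightarrow> 'a \<Rightarrow> bool) \<Rightarrow> 'a \<Rightarrow> nat" where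
  "deg V E v = card (nbhd V E v)"

definition in_G_ab :: "int \<Rightarrow> int \<Rightarrow> 'a set \<Rightarrow> ('a \<Rightarrow> 'a \<Rightarrow> bool) \<Rightarrow> bool" where
  "in_G_ab a b V E \<longleftrightarrow> simple_conn_graph V E \<and>
     (\<forall>v\<in>V. (\<Sum>u\<in>nbhd V E v. int (deg V E u))
              = a * int (deg V E v) + b - int (deg V E v) ^ 2)"

definition internal_walk :: "'a set \<Rightarrow> ('a \<Rightarrow> 'a \<Rightarrow> bool) \<Rightarrow> (nat \<Rightarrow> 'a) \<Rightarrow> nat \<Rightarrow> bool" where
  "internal_walk V E u k \<longleftrightarrow> 1 \<le> k \<and> (\<forall>i\<le>k. u i \<in> V) \<and> (\<forall>i<k. E (u i) (u (Suc i))) \<and>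
     deg V E (u 0) \<ge> 3 \<and> deg V E (u k) \<ge> 3 \<and> (\<forall>i. 1 \<le> i \<and> i < k \<longrightarrow> deg V E (u i) = 2)"

definition internal_path :: "'a set \<Rightarrow> ('a \<Rightarrow> 'a \<Rightarrow> bool) \<Rightarrow> (nat \<Rightarrow> 'a) \<Rightarrow> nat \<Rightarrow> bool" where
  "internal_path V E u k \<longleftrightarrow> internal_walk V E u k \<and> inj_on u {0..k}"

definition internal_cycle :: "'a set \<Rightarrow> ('a \<Rightarrow> 'a \<Rightarrow> bool) \<Rightarrow> (nat \<Rightarrow> 'a) \<Rightarrow> nat \<Rightarrow> bool" where
  "internal_cycle V E u k \<longleftrightarrow> internal_walk V E u k \<and> 3 \<le> k \<and> u 0 = u k \<and> inj_on u {0..<k}"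

end

theory Submission
  imports Defs
begin

lemma key:
  assumes G: "in_G_ab a b V E" and v: "v \<in> V" and d: "deg V E v = 2"
    and ex: "E v x" and ey: "E v y" and xy: "x \<noteq> y"
  shows "int (deg V E x) + int (deg V E y) = 2*a + b - 4"
proof -
  have sg: "simple_conn_graph V E" and eq: "\<forall>v\<in>V. (\<Sum>u\<in>nbhd V E v. int (deg V E u))
              = a * int (deg V E v) + b - int (deg V E v) ^ 2"
    using G unfolding in_G_ab_def by auto
  have fin: "finite V" and inV: "\<forall>x y. E x y \<longrightarrow> x \<in> V \<and> y \<in> V"
    using sg unfolding simple_conn_graph_def by auto
  have sub: "{x,y} \<subseteq> nbhd V E v" using ex ey inV unfolding nbhd_def by auto
  have fn: "finite (nbhd V E v)" using fin unfolding nbhd_def by auto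
  have "card {x,y} = card (nbhd V E v)" using d xy unfolding deg_def by simp
  then have N: "nbhd V E v = {x,y}" using card_subset_eq[OF fn sub] by simp
  show ?thesis using eq v N d xy by auto
qed

lemma sym_E: "in_G_ab a b V E \<Longrightarrow> E x y \<Longrightarrow> E y x"
  unfolding in_G_ab_def simple_conn_graph_def by blast

theorem lemma1p6:
  fixes a b :: int and V :: "'a set" and E :: "'a \<Rightarrow> 'a \<Rightarrow> bool"
    and u :: "nat \<Rightarrow> 'a" and k :: nat
  assumes G: "in_G_ab a b V E"
    and P: "internal_path V E u k \<or> internal_cycle V E u k"
  shows "k \<le> 3 \<and>
    (k = 3 \<longrightarrow> \<not> (\<exists>v. internal_path V E v 2 \<and>
            deg V E (v 0) = deg V E (u 0) \<and> deg V E (v 2) = deg V E (u 0))) \<and>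
    (k = 3 \<longrightarrow> deg V E (u 0) = deg V E (u 3) \<and>
       (\<forall>v. internal_path V E v 3 \<longrightarrow>
           deg V E (v 0) = deg V E (v 3) \<and> deg V E (v 3) = deg V E (u 0)))"
proof -
  have W: "internal_walk V E u k" using P unfolding internal_path_def internal_cycle_def by auto
  have dist: "\<And>i j. i < j \<Longrightarrow> j < k \<Longrightarrow> u i \<noteq> u j"
  proof -
    fix i j assume ij: "i < j" "j < k"
    show "u i \<noteq> u j"
    proof
      assume e: "u i = u j"
      have "i \<in> {0..<k}" "j \<in> {0..<k}" "i \<in> {0..k}" "j \<in> {0..k}" using ij by auto
      then have "i = j" using P e unfolding internal_path_def internal_cycle_def inj_on_def by blast
      then show False using ij by simp
    qed
  qed
  have Wf: "1 \<le> k" "\<forall>i\<le>k. u i \<in> V" "\<forall>i<k. E (u i) (u (Suc i))"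
      "deg V E (u 0) \<ge> 3" "deg V E (u k) \<ge> 3" "\<forall>i. 1 \<le> i \<and> i < k \<longrightarrow> deg V E (u i) = 2"
    using W unfolding internal_walk_def by auto
  have k3: "k \<le> 3"
  proof (rule ccontr)
    assume "\<not> k \<le> 3"
    then have k4: "4 \<le> k" by simp
    have "int (deg V E (u 0)) + int (deg V E (u 2)) = 2*a+b-4"
      using key[OF G, of "u 1" "u 0" "u 2"] Wf k4 sym_E[OF G] dist[of 0 2]
      by (simp add: numeral_2_eq_2)
    moreover have "int (deg V E (u 1)) + int (deg V E (u 3)) = 2*a+b-4"
      using key[OF G, of "u 2" "u 1" "u 3"] Wf k4 sym_E[OF G] dist[of 1 3]
      by (simp add: numeral_2_eq_2 numeral_3_eq_3)
    moreover have "deg V E (u 1) = 2" "deg V E (u 2) = 2" "deg V E (u 3) = 2" using Wf k4 by auto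
    ultimately show False using Wf by simp
  qed
  have c: "k = 3 \<Longrightarrow> int (deg V E (u 0)) + 2 = 2*a+b-4 \<and> 2 + int (deg V E (u 3)) = 2*a+b-4"
  proof -
    assume k: "k = 3"
    have u13: "u 1 \<noteq> u 3"
    proof (cases "internal_path V E u k")
      case True then show ?thesis using k unfolding internal_path_def inj_on_def by fastforce
    next
      case False then have "u 0 = u 3" using P k unfolding internal_cycle_def by auto
      then show ?thesis using dist[of 0 1] k by simp
    qed
    have "int (deg V E (u 0)) + int (deg V E (u 2)) = 2*a+b-4"
      using key[OF G, of "u 1" "u 0" "u 2"] Wf k sym_E[OF G] dist[of 0 2]
      by (simp add: numeral_2_eq_2)
    moreover have "int (deg V E (u 1)) + int (deg V E (u 3)) = 2*a+b-4"
      using key[OF G, of "u 2" "u 1" "u 3"] Wf k sym_E[OF G] u13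
      by (simp add: numeral_2_eq_2 numeral_3_eq_3)
    moreover have "deg V E (u 1) = 2" "deg V E (u 2) = 2" using Wf k by auto
    ultimately show ?thesis by simp
  qed
  have c2: "\<And>v. internal_path V E v 2 \<Longrightarrow> int (deg V E (v 0)) + int (deg V E (v 2)) = 2*a+b-4"
  proof -
    fix v assume "internal_path V E v 2"
    then have W: "\<forall>i\<le>2. v i \<in> V" "\<forall>i<2. E (v i) (v (Suc i))" "deg V E (v 1) = 2"
      and inj: "inj_on v {0..2}" unfolding internal_path_def internal_walk_def by auto
    have "v 0 \<noteq> v 2" using inj unfolding inj_on_def by fastforce
    then show "int (deg V E (v 0)) + int (deg V E (v 2)) = 2*a+b-4"
      using key[OF G, of "v 1" "v 0" "v 2"] W sym_E[OF G]
      by (simp add: numeral_2_eq_2)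
  qed
  have c3: "\<And>v. internal_path V E v 3 \<Longrightarrow> int (deg V E (v 0)) + 2 = 2*a+b-4 \<and> 2 + int (deg V E (v 3)) = 2*a+b-4"
  proof -
    fix v assume "internal_path V E v 3"
    then have W: "\<forall>i\<le>3. v i \<in> V" "\<forall>i<3. E (v i) (v (Suc i))" "deg V E (v 1) = 2" "deg V E (v 2) = 2"
      and inj: "inj_on v {0..3}" unfolding internal_path_def internal_walk_def by auto
    have "v 0 \<noteq> v 2" "v 1 \<noteq> v 3" using inj unfolding inj_on_def by fastforce+
    then show "int (deg V E (v 0)) + 2 = 2*a+b-4 \<and> 2 + int (deg V E (v 3)) = 2*a+b-4"
      using key[OF G, of "v 1" "v 0" "v 2"] key[OF G, of "v 2" "v 1" "v 3"] W sym_E[OF G]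
      by (simp add: numeral_2_eq_2 numeral_3_eq_3)
  qed
  show ?thesis
  proof (intro conjI impI)
    show "k \<le> 3" by (rule k3)
  next
    assume k: "k = 3"
    show "\<not> (\<exists>v. internal_path V E v 2 \<and>
            deg V E (v 0) = deg V E (u 0) \<and> deg V E (v 2) = deg V E (u 0))"
      using c[OF k] c2 Wf(4) by force
  next
    assume k: "k = 3"
    show "deg V E (u 0) = deg V E (u 3)" using c[OF k] by simp
  next
    assume k: "k = 3"
    show "\<forall>v. internal_path V E v 3 \<longrightarrow>
           deg V E (v 0) = deg V E (v 3) \<and> deg V E (v 3) = deg V E (u 0)"
      using c[OF k] c3 by force
  qed
qed

end
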